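(* Let $(G,D,\star)$ be a probabilistic metric space such that $\star$ is sup-continuous, let $A$ be a nonempty subset of $G$, and let $f:A\to\Delta^+$ be a probabilistic $1$-Lipschitz map (i.e. $D(x,y)\star f(y)\le f(x)$ for all $x,y\in A$). Then there exists a probabilistic $1$-Lipschitz map $\tilde f:G\to\Delta^+$ with $\tilde f|_A=f$.
   Context: A distribution function is a nondecreasing, left-continuous function $F:[-\infty,+\infty]\to[0,1]$ with $F(-\infty)=0$, $F(+\infty)=1$; $\Delta^+$ is the set of distribution functions with $F(0)=0$, ordered pointwise; $(\Delta^+,\le)$ is a complete lattice with maximum $\mathcal H_0$ ($\mathcal H_0(t)=0$ for $t\le0$, $1$ for $t>0$). A triangle function is a binary operation $\star$ on $\Delta^+$ that is commutative, associative, nondecreasing in each argument, with $F\star\mathcal H_0=F$. It is sup-continuous if $\sup_{i\in I}(F_i\star L)=(\sup_{i\in I}F_i)\star L$ for every nonempty family $(F_i)_{i\in I}\subset\Delta^+$ and every $L\in\Delta^+$. A probabilistic metric space $(G,D,\star)$ consists of a set $G$, a triangle function $\star$ and $D:G\times G\to\Delta^+$ with (i) $D(p,q)=\mathcal H_0$ iff $p=q$; (ii) $D(p,q)=D(q,p)$; (iii) $D(p,q)\star D(q,r)\le D(p,r)$. A map $f:G\to\Delta^+$ is probabilistic $1$-Lipschitz if $D(x,y)\star f(y)\le f(x)$ for all $x,y\in G$. *)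

theory Defs
  imports "HOL-Analysis.Analysis"
begin

type_synonym dfun = "ereal \<Rightarrow> real"

definition distribution_function :: "dfun \<Rightarrow> bool" where
  "distribution_function F \<longleftrightarrow>
     mono F \<and> (\<forall>t. 0 \<le> F t \<and> F t \<le> 1) \<and>
     (\<forall>x::real. ((\<lambda>y::real. F (ereal y)) \<longlongrightarrow> F (ereal x)) (at_left x)) \<and>
     F (-\<infinity>) = 0 \<and> F \<infinity> = 1"

definition DeltaPlus :: "dfun set" where
  "DeltaPlus = {F. distribution_function F \<and> F 0 = 0}"

definition H0 :: dfun where
  "H0 t = (if t \<le> 0 then 0 else 1)"

definition triangle_function :: "(dfun \<Rightarrow> dfun \<Rightarrow> dfun) \<Rightarrow> bool" where
  "triangle_function T \<longleftrightarrow>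
     (\<forall>F\<in>DeltaPlus. \<forall>G\<in>DeltaPlus. T F G \<in> DeltaPlus) \<and>
     (\<forall>F\<in>DeltaPlus. \<forall>G\<in>DeltaPlus. T F G = T G F) \<and>
     (\<forall>F\<in>DeltaPlus. \<forall>G\<in>DeltaPlus. \<forall>K\<in>DeltaPlus. T (T F G) K = T F (T G K)) \<and>
     (\<forall>F\<in>DeltaPlus. \<forall>G\<in>DeltaPlus. \<forall>L\<in>DeltaPlus. F \<le> G \<longrightarrow> T F L \<le> T G L) \<and>
     (\<forall>F\<in>DeltaPlus. T F H0 = F)"

text \<open>The supremum in the complete lattice (Delta+, <=) of a nonempty family
is the pointwise supremum.\<close>
definition dsup :: "'i set \<Rightarrow> ('i \<Rightarrow> dfun) \<Rightarrow> dfun" where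
  "dsup I Fs = (\<lambda>t. SUP i\<in>I. Fs i t)"

definition sup_continuous_tf :: "(dfun \<Rightarrow> dfun \<Rightarrow> dfun) \<Rightarrow> bool" where
  "sup_continuous_tf T \<longleftrightarrow>
     (\<forall>(I::dfun set) (Fs::dfun \<Rightarrow> dfun) L. I \<noteq> {} \<longrightarrow> Fs ` I \<subseteq> DeltaPlus \<longrightarrow> L \<in> DeltaPlus \<longrightarrow>
        dsup I (\<lambda>i. T (Fs i) L) = T (dsup I Fs) L)"

definition PM_space :: "'a set \<Rightarrow> ('a \<Rightarrow> 'a \<Rightarrow> dfun) \<Rightarrow> (dfun \<Rightarrow> dfun \<Rightarrow> dfun) \<Rightarrow> bool" where
  "PM_space G D T \<longleftrightarrow> triangle_function T \<and>
     (\<forall>p\<in>G. \<forall>q\<in>G. D p q \<in> DeltaPlus) \<and>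
     (\<forall>p\<in>G. \<forall>q\<in>G. D p q = H0 \<longleftrightarrow> p = q) \<and>
     (\<forall>p\<in>G. \<forall>q\<in>G. D p q = D q p) \<and>
     (\<forall>p\<in>G. \<forall>q\<in>G. \<forall>r\<in>G. T (D p q) (D q r) \<le> D p r)"

definition prob_lipschitz_on :: "'a set \<Rightarrow> ('a \<Rightarrow> 'a \<Rightarrow> dfun) \<Rightarrow> (dfun \<Rightarrow> dfun \<Rightarrow> dfun) \<Rightarrow> ('a \<Rightarrow> dfun) \<Rightarrow> bool" where
  "prob_lipschitz_on S D T f \<longleftrightarrow>
     (\<forall>x\<in>S. f x \<in> DeltaPlus) \<and> (\<forall>x\<in>S. \<forall>y\<in>S. T (D x y) (f y) \<le> f x)"

end

theory Submission
  imports Defs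
begin

lemma DP_facts:
  assumes "F \<in> DeltaPlus"
  shows "mono F" "0 \<le> F t" "F t \<le> 1" "F (-\<infinity>) = 0" "F \<infinity> = 1" "F 0 = 0"
    "((\<lambda>y::real. F (ereal y)) \<longlongrightarrow> F (ereal x)) (at_left x)"
  using assms unfolding DeltaPlus_def distribution_function_def by auto

lemma bdd_DP: "\<forall>i\<in>I. F i \<in> DeltaPlus \<Longrightarrow> bdd_above ((\<lambda>i. F i t) ` I)"
  by (rule bdd_aboveI[where M=1]) (auto dest: DP_facts)

lemma sup_DeltaPlus:
  assumes ne: "I \<noteq> {}" and F: "\<forall>i\<in>I. F i \<in> DeltaPlus"
  shows "(\<lambda>t. SUP i\<in>I. F i t) \<in> DeltaPlus"
proof -
  let ?S = "\<lambda>t. SUP i\<in>I. F i t"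
  have bdd: "\<And>t. bdd_above ((\<lambda>i. F i t) ` I)" using bdd_DP[OF F] .
  have const: "?S t = c" if "\<And>i. i \<in> I \<Longrightarrow> F i t = c" for t c
    using that ne by simp
  have mono: "mono ?S"
  proof (rule monoI)
    fix s t :: ereal assume "s \<le> t"
    show "?S s \<le> ?S t"
      by (rule cSUP_mono[OF ne bdd]) (use \<open>s \<le> t\<close> F in \<open>auto dest!: DP_facts(1) monoD\<close>)
  qed
  have ge: "F i t \<le> ?S t" if "i \<in> I" for i t using cSUP_upper[OF that bdd] .
  have lo: "0 \<le> ?S t" for t
  proof -
    obtain i where "i \<in> I" using ne by auto
    thus ?thesis using ge[of i t] DP_facts(2)[of "F i" t] F by fastforce
  qed
  have hi: "?S t \<le> 1" for t
    by (rule cSUP_least[OF ne]) (use F in \<open>auto dest: DP_facts\<close>)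
  have lc: "((\<lambda>y::real. ?S (ereal y)) \<longlongrightarrow> ?S (ereal x)) (at_left x)" for x
  proof (rule order_tendstoI)
    fix a assume a: "a > ?S (ereal x)"
    show "\<forall>\<^sub>F y in at_left x. ?S (ereal y) < a"
      unfolding eventually_at_left_field
      by (rule exI[of _ "x - 1"]) (auto intro: le_less_trans[OF monoD[OF mono] a])
  next
    fix a assume a: "a < ?S (ereal x)"
    then obtain i where i: "i \<in> I" "a < F i (ereal x)"
      using less_cSUP_iff[OF ne bdd] by blast
    have "\<forall>\<^sub>F y in at_left x. a < F i (ereal y)"
      using order_tendstoD(1)[OF DP_facts(7)[of "F i" x] i(2)] F i(1) by auto
    thus "\<forall>\<^sub>F y in at_left x. a < ?S (ereal y)"
      by eventually_elim (use ge[OF i(1)] in \<open>fastforce intro: less_le_trans\<close>)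
  qed
  have "?S (-\<infinity>) = 0" by (rule const) (use F in \<open>auto dest: DP_facts\<close>)
  moreover have "?S \<infinity> = 1" by (rule const) (use F in \<open>auto dest: DP_facts\<close>)
  moreover have "?S 0 = 0" by (rule const) (use F in \<open>auto dest: DP_facts\<close>)
  ultimately show ?thesis
    unfolding DeltaPlus_def distribution_function_def using mono lo hi lc by auto
qed

theorem mainTheorem4:
  fixes G A :: "'a set" and D :: "'a \<Rightarrow> 'a \<Rightarrow> dfun" and T :: "dfun \<Rightarrow> dfun \<Rightarrow> dfun"
    and f :: "'a \<Rightarrow> dfun"
  assumes "PM_space G D T" and "sup_continuous_tf T"
    and "A \<subseteq> G" and "A \<noteq> {}"
    and "prob_lipschitz_on A D T f"
  shows "\<exists>g. prob_lipschitz_on G D T g \<and> (\<forall>x\<in>A. g x = f x)"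
proof -
  note pm = assms(1)[unfolded PM_space_def]
  have tf: "triangle_function T" using pm by auto
  note tfs = tf[unfolded triangle_function_def]
  have Tin: "\<And>F K. F \<in> DeltaPlus \<Longrightarrow> K \<in> DeltaPlus \<Longrightarrow> T F K \<in> DeltaPlus" using tfs by auto
  have Tcomm: "\<And>F K. F \<in> DeltaPlus \<Longrightarrow> K \<in> DeltaPlus \<Longrightarrow> T F K = T K F" using tfs by auto
  have Tassoc: "\<And>F K L. F \<in> DeltaPlus \<Longrightarrow> K \<in> DeltaPlus \<Longrightarrow> L \<in> DeltaPlus \<Longrightarrow> T (T F K) L = T F (T K L)"
    using tfs by auto
  have Tmono: "\<And>F K L. F \<in> DeltaPlus \<Longrightarrow> K \<in> DeltaPlus \<Longrightarrow> L \<in> DeltaPlus \<Longrightarrow> F \<le> K \<Longrightarrow> T F L \<le> T K L"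
    using tfs by auto
  have TH: "\<And>F. F \<in> DeltaPlus \<Longrightarrow> T F H0 = F" using tfs by auto
  have Din: "\<And>p q. p \<in> G \<Longrightarrow> q \<in> G \<Longrightarrow> D p q \<in> DeltaPlus" using pm by auto
  have Dsym: "\<And>p q. p \<in> G \<Longrightarrow> q \<in> G \<Longrightarrow> D p q = D q p" using pm by auto
  have Dxx: "\<And>p. p \<in> G \<Longrightarrow> D p p = H0" using pm by auto
  have Dtri: "\<And>p q r. p \<in> G \<Longrightarrow> q \<in> G \<Longrightarrow> r \<in> G \<Longrightarrow> T (D p q) (D q r) \<le> D p r" using pm by auto
  have fin: "\<And>a. a \<in> A \<Longrightarrow> f a \<in> DeltaPlus" using assms(5) unfolding prob_lipschitz_on_def by auto
  have flip: "\<And>x y. x \<in> A \<Longrightarrow> y \<in> A \<Longrightarrow> T (D x y) (f y) \<le> f x"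
    using assms(5) unfolding prob_lipschitz_on_def by auto
  have H0in: "H0 \<in> DeltaPlus" using Din Dxx assms(3,4) by force
  define h where "h x a = T (D x a) (f a)" for x a
  define g where "g x = (\<lambda>t. SUP a\<in>A. h x a t)" for x
  have hin: "x \<in> G \<Longrightarrow> a \<in> A \<Longrightarrow> h x a \<in> DeltaPlus" for x a
    unfolding h_def using Tin Din fin assms(3) by blast
  have gin: "x \<in> G \<Longrightarrow> g x \<in> DeltaPlus" for x
    unfolding g_def by (rule sup_DeltaPlus[OF assms(4)]) (use hin in auto)
  have bdd: "x \<in> G \<Longrightarrow> bdd_above ((\<lambda>a. h x a t) ` A)" for x t
    by (rule bdd_DP) (use hin in auto)
  have lip: "T (D x y) (g y) \<le> g x" if x: "x \<in> G" and y: "y \<in> G" for x y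
  proof -
    let ?I = "h y ` A"
    have gy: "g y = dsup ?I id" unfolding g_def dsup_def by (simp add: image_image)
    have "T (g y) (D x y) = dsup ?I (\<lambda>F. T (id F) (D x y))"
    proof -
      have sub: "id ` ?I \<subseteq> DeltaPlus" using hin y by auto
      show ?thesis unfolding gy
        using assms(2)[unfolded sup_continuous_tf_def, rule_format, OF _ sub Din[OF x y]]
          assms(4) by auto
    qed
    also have "\<dots> = (\<lambda>t. SUP a\<in>A. T (h y a) (D x y) t)"
      unfolding dsup_def by (simp add: image_image)
    also have "\<dots> \<le> g x"
    proof (rule le_funI, rule cSUP_least[OF assms(4)])
      fix t a assume a: "a \<in> A"
      have aG: "a \<in> G" using a assms(3) by auto
      have "T (h y a) (D x y) = T (D x y) (T (D y a) (f a))"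
        unfolding h_def using Tcomm Tin Din fin a aG x y by simp
      also have "\<dots> = T (T (D x y) (D y a)) (f a)"
        using Tassoc Din fin a aG x y by simp
      also have "\<dots> \<le> h x a"
        unfolding h_def using Tmono Tin Din Dtri fin a aG x y by simp
      finally have "T (h y a) (D x y) t \<le> h x a t" by (simp add: le_fun_def)
      also have "h x a t \<le> g x t" unfolding g_def by (rule cSUP_upper[OF a bdd[OF x]])
      finally show "T (h y a) (D x y) t \<le> g x t" .
    qed
    finally show ?thesis using Tcomm gin Din x y by metis
  qed
  have ext: "g x = f x" if x: "x \<in> A" for x
  proof (rule ext)
    fix t
    have xG: "x \<in> G" using x assms(3) by auto
    have "h x x = f x" unfolding h_def using Dxx[OF xG] Tcomm[OF H0in fin[OF x]] TH fin x by simp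
    hence "f x t \<le> g x t" unfolding g_def using cSUP_upper[OF x bdd[OF xG], of t] by simp
    moreover have "g x t \<le> f x t" unfolding g_def
      by (rule cSUP_least[OF assms(4)]) (use flip x in \<open>auto simp: h_def le_fun_def\<close>)
    ultimately show "g x t = f x t" by simp
  qed
  show ?thesis
    by (rule exI[of _ g]) (use gin lip ext in \<open>auto simp: prob_lipschitz_on_def\<close>)
qed

end
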